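(* Let $X$ be a complex Banach space, $T\in B(X)$ a Fredholm operator, and $(T_n)$ a sequence in $B(X)$ with $T_n\overset{\nu}{\to}T$. Then $[\limsup\sigma_{ap}(T_n)]\setminus\{0\}\subseteq\sigma_{ap}(T)$.
   Context: $\sigma_{ap}(S)=\{\lambda\in\mathbb{C}: S-\lambda \text{ is not bounded below}\}$. For subsets $E_n\subseteq\mathbb{C}$, $\limsup E_n$ is the set of $\lambda$ such that for every $\epsilon>0$ the ball $B(\lambda,\epsilon)$ meets $E_n$ for infinitely many $n$. $T_n\overset{\nu}{\to}T$ means $(\|T_n\|)$ is bounded, $\|(T_n-T)T\|\to0$ and $\|(T_n-T)T_n\|\to0$. *)

theory Defs
  imports "HOL-Analysis.Analysis"
begin

text \<open>Complex Banach spaces: HOL-Analysis only provides real normed spaces, so we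
  add a complex scalar multiplication compatible with the real one and the norm.\<close>

class complex_banach = banach +
  fixes cscale :: "complex \<Rightarrow> 'a \<Rightarrow> 'a"
  assumes cscale_add_right: "cscale a (x + y) = cscale a x + cscale a y"
    and cscale_add_left: "cscale (a + b) x = cscale a x + cscale b x"
    and cscale_cscale: "cscale a (cscale b x) = cscale (a * b) x"
    and cscale_one: "cscale 1 x = x"
    and cscale_of_real: "cscale (of_real r) x = scaleR r x"
    and norm_cscale: "norm (cscale a x) = cmod a * norm x"

definition bop :: "('a::complex_banach \<Rightarrow> 'a) \<Rightarrow> bool" where
  "bop T \<longleftrightarrow> bounded_linear T \<and> (\<forall>c x. T (cscale c x) = cscale c (T x))"

text \<open>Finite-dimensional subset (real and complex finite dimensionality coincide).\<close>
definition findim :: "'a::real_vector set \<Rightarrow> bool" where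
  "findim S \<longleftrightarrow> (\<exists>B. finite B \<and> S \<subseteq> span B)"

definition fredholm :: "('a::complex_banach \<Rightarrow> 'a) \<Rightarrow> bool" where
  "fredholm T \<longleftrightarrow> bop T \<and> findim {x. T x = 0} \<and> closed (range T) \<and>
     (\<exists>M. subspace M \<and> findim M \<and> range T + M = UNIV)"

definition bounded_below :: "('a::real_normed_vector \<Rightarrow> 'b::real_normed_vector) \<Rightarrow> bool" where
  "bounded_below S \<longleftrightarrow> (\<exists>c>0. \<forall>x. c * norm x \<le> norm (S x))"

definition ap_spectrum :: "('a::complex_banach \<Rightarrow> 'a) \<Rightarrow> complex set" where
  "ap_spectrum S = {l. \<not> bounded_below (\<lambda>x. S x - cscale l x)}"

definition limsup_sets :: "(nat \<Rightarrow> complex set) \<Rightarrow> complex set" where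
  "limsup_sets E = {l. \<forall>\<epsilon>>0. infinite {n. ball l \<epsilon> \<inter> E n \<noteq> {}}}"

definition nu_conv :: "(nat \<Rightarrow> 'a::complex_banach \<Rightarrow> 'a) \<Rightarrow> ('a \<Rightarrow> 'a) \<Rightarrow> bool" where
  "nu_conv Tn T \<longleftrightarrow> bounded (range (\<lambda>n. onorm (Tn n))) \<and>
     (\<lambda>n. onorm (\<lambda>x. Tn n (T x) - T (T x))) \<longlonglongrightarrow> 0 \<and>
     (\<lambda>n. onorm (\<lambda>x. Tn n (Tn n x) - T (Tn n x))) \<longlonglongrightarrow> 0"

end

theory Submission
  imports Defs
begin

lemma cscale_zero_right: "cscale a (0::'a::complex_banach) = 0"
  using cscale_add_right[of a "0::'a" 0] by simp

lemma cscale_diff_right: "cscale a (x - y) = cscale a x - cscale a (y::'a::complex_banach)"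
  using cscale_add_right[of a "x - y" y] by (simp add: algebra_simps)

lemma cscale_diff_left: "cscale (a - b) (x::'a::complex_banach) = cscale a x - cscale b x"
  using cscale_add_left[of "a - b" b x] by (simp add: algebra_simps)

lemma key_estimate:
  fixes T S :: "'a::complex_banach \<Rightarrow> 'a"
  assumes bT: "bop T" and bS: "bop S"
  shows "cmod \<mu> * norm (T x - cscale \<mu> x) \<le>
     (onorm S + cmod \<mu> + onorm T) * norm (S x - cscale \<mu> x)
     + onorm (\<lambda>x. S (S x) - T (S x)) * norm x"
proof -
  have lT: "bounded_linear T" and lS: "bounded_linear S"
    and cT: "\<And>c x. T (cscale c x) = cscale c (T x)" and cS: "\<And>c x. S (cscale c x) = cscale c (S x)"
    using bT bS unfolding bop_def by auto
  define y where "y = S x - cscale \<mu> x"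
  define D where "D = S (S x) - T (S x)"
  have Sy: "S y = S (S x) - cscale \<mu> (S x)"
    unfolding y_def using lS cS by (simp add: linear_simps)
  have Ty: "T y = T (S x) - cscale \<mu> (T x)"
    unfolding y_def using lT cT by (simp add: linear_simps)
  have my: "cscale \<mu> y = cscale \<mu> (S x) - cscale (\<mu> * \<mu>) x"
    unfolding y_def by (simp add: cscale_diff_right cscale_cscale)
  have eq: "cscale \<mu> (T x - cscale \<mu> x) = S y + cscale \<mu> y - T y - D"
    unfolding Sy Ty my D_def by (simp add: cscale_diff_right cscale_cscale)
  have lD: "bounded_linear (\<lambda>x. S (S x) - T (S x))"
    by (intro bounded_linear_sub bounded_linear_compose[OF lS lS] bounded_linear_compose[OF lT lS])
  have "cmod \<mu> * norm (T x - cscale \<mu> x) = norm (S y + cscale \<mu> y - T y - D)"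
    by (metis eq norm_cscale)
  also have "\<dots> \<le> norm (S y) + norm (cscale \<mu> y) + norm (T y) + norm D"
    by (smt (verit) norm_diff_ineq norm_triangle_ineq4 norm_triangle_ineq)
  also have "\<dots> \<le> onorm S * norm y + cmod \<mu> * norm y + onorm T * norm y
       + onorm (\<lambda>x. S (S x) - T (S x)) * norm x"
    using onorm[OF lS, of y] onorm[OF lT, of y] onorm[OF lD, of x]
    unfolding D_def norm_cscale by simp
  finally show ?thesis unfolding y_def by (simp add: algebra_simps)
qed

theorem theorem3p3:
  fixes T :: "'a::complex_banach \<Rightarrow> 'a" and Tn :: "nat \<Rightarrow> 'a \<Rightarrow> 'a"
  assumes "fredholm T"
    and "\<And>n. bop (Tn n)"
    and "nu_conv Tn T"
  shows "limsup_sets (\<lambda>n. ap_spectrum (Tn n)) - {0} \<subseteq> ap_spectrum T"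
proof
  fix l assume "l \<in> limsup_sets (\<lambda>n. ap_spectrum (Tn n)) - {0}"
  hence lim: "\<And>e. e > 0 \<Longrightarrow> infinite {n. ball l e \<inter> ap_spectrum (Tn n) \<noteq> {}}" and l0: "l \<noteq> 0"
    unfolding limsup_sets_def by auto
  show "l \<in> ap_spectrum T"
  proof (rule ccontr)
    assume "l \<notin> ap_spectrum T"
    then obtain c where c: "c > 0" "\<And>x. c * norm x \<le> norm (T x - cscale l x)"
      unfolding ap_spectrum_def bounded_below_def by auto
    have bT: "bop T" using assms(1) unfolding fredholm_def by auto
    have lT: "bounded_linear T" using bT unfolding bop_def by auto
    have lTn: "\<And>n. bounded_linear (Tn n)" using assms(2) unfolding bop_def by auto
    obtain M where M: "\<And>n. norm (onorm (Tn n)) \<le> M"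
      using assms(3) unfolding nu_conv_def bounded_iff by auto
    have M0: "0 \<le> M" using M[of 0] norm_ge_zero[of "onorm (Tn 0)"] by linarith
    have Mn: "onorm (Tn n) \<le> M" for n
    proof -
      have "onorm (Tn n) \<le> norm (onorm (Tn n))" by simp
      thus ?thesis using M[of n] by linarith
    qed
    define K where "K = onorm T"
    have K0: "0 \<le> K" unfolding K_def by (rule onorm_pos_le[OF lT])
    define \<eta> where "\<eta> n = onorm (\<lambda>x. Tn n (Tn n x) - T (Tn n x))" for n
    have eta: "\<eta> \<longlonglongrightarrow> 0" using assms(3) unfolding nu_conv_def \<eta>_def by auto
    define d where "d = cmod l * c / 8"
    have d0: "d > 0" unfolding d_def using l0 c by simp
    obtain N where N: "\<And>n. n \<ge> N \<Longrightarrow> norm (\<eta> n) < d"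
      using LIMSEQ_D[OF eta d0] by auto
    define e where "e = min (c/2) (cmod l / 2)"
    have e0: "e > 0" unfolding e_def using c l0 by simp
    have ec: "e \<le> c/2" and el: "e \<le> cmod l / 2" unfolding e_def by auto
    have lpos: "cmod l > 0" using l0 by simp
    have sub: "{n. ball l e \<inter> ap_spectrum (Tn n) \<noteq> {}} \<subseteq> {..<N}"
    proof
      fix n assume "n \<in> {n. ball l e \<inter> ap_spectrum (Tn n) \<noteq> {}}"
      then obtain \<mu> where mu: "\<mu> \<in> ball l e" "\<mu> \<in> ap_spectrum (Tn n)" by auto
      have dist: "cmod (l - \<mu>) < e" using mu(1) by (simp add: dist_norm)
      have mul: "cmod \<mu> \<ge> cmod l / 2"
        using dist norm_triangle_ineq2[of l \<mu>] el by linarith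
      have "cmod \<mu> = cmod (l - (l - \<mu>))" by simp
      also have "\<dots> \<le> cmod l + cmod (l - \<mu>)" by (rule norm_triangle_ineq4)
      finally have mub: "cmod \<mu> \<le> 3 * cmod l / 2"
        using dist el by linarith
      show "n \<in> {..<N}"
      proof (rule ccontr)
        assume "n \<notin> {..<N}"
        hence "N \<le> n" by simp
        hence "norm (\<eta> n) < d" by (rule N)
        hence etan: "\<eta> n < d" using abs_ge_self[of "\<eta> n"] by simp
        define A where "A = M + 3 * cmod l / 2 + K"
        have A0: "A > 0" unfolding A_def using M0 K0 lpos by linarith
        have "bounded_below (\<lambda>x. Tn n x - cscale \<mu> x)"
          unfolding bounded_below_def
        proof (intro exI[of _ "d / A"] conjI allI)
          show "0 < d / A" using d0 A0 by simp
          fix x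
          have est: "cmod \<mu> * norm (T x - cscale \<mu> x) \<le>
             (onorm (Tn n) + cmod \<mu> + onorm T) * norm (Tn n x - cscale \<mu> x) + \<eta> n * norm x"
            unfolding \<eta>_def by (rule key_estimate[OF bT assms(2)])
          have "T x - cscale l x = (T x - cscale \<mu> x) - cscale (l - \<mu>) x"
            by (simp add: cscale_diff_left)
          hence "norm (T x - cscale l x) \<le> norm (T x - cscale \<mu> x) + cmod (l - \<mu>) * norm x"
            by (metis norm_cscale norm_triangle_ineq4)
          hence "c * norm x \<le> norm (T x - cscale \<mu> x) + e * norm x"
            using c(2)[of x] dist mult_right_mono[of "cmod (l - \<mu>)" e "norm x"] by auto
          hence h1: "(c/2) * norm x \<le> norm (T x - cscale \<mu> x)"
            using mult_right_mono[OF ec norm_ge_zero[of x]] by linarith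
          have "(cmod l / 2) * ((c/2) * norm x) \<le> cmod \<mu> * norm (T x - cscale \<mu> x)"
            by (rule mult_mono[OF mul h1]) (use c in auto)
          hence h2: "2 * d * norm x \<le> cmod \<mu> * norm (T x - cscale \<mu> x)"
            unfolding d_def by (simp add: algebra_simps)
          have h3: "\<eta> n * norm x \<le> d * norm x"
            using etan by (simp add: mult_right_mono)
          have h4: "(onorm (Tn n) + cmod \<mu> + onorm T) * norm (Tn n x - cscale \<mu> x)
                \<le> A * norm (Tn n x - cscale \<mu> x)"
            apply (rule mult_right_mono)
            using Mn[of n] mub unfolding A_def K_def by auto
          have "d * norm x \<le> A * norm (Tn n x - cscale \<mu> x)"
            using est h2 h3 h4 by linarith
          thus "d / A * norm x \<le> norm (Tn n x - cscale \<mu> x)"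
            using A0 by (simp add: field_simps)
        qed
        thus False using mu(2) unfolding ap_spectrum_def by auto
      qed
    qed
    have "finite {n. ball l e \<inter> ap_spectrum (Tn n) \<noteq> {}}"
      using finite_subset[OF sub] by simp
    thus False using lim[OF e0] by simp
  qed
qed

end
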